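(* Under Assumption 1, let $\lambda^0\in\mathbb D$, let $\{(z^k,\lambda^k)\}_{k\ge0}$ be generated by Algorithm (DG), and let $\bar\kappa>0$ be a constant such that $\|\lambda-[\lambda]^W_{\Lambda^*}\|_W\le\bar\kappa\,\|\nabla^+d(\lambda)\|_W$ for all $\lambda\in\mathbb D$ with $\mathcal T(\lambda)\le\mathcal T(\lambda^0)$. Set $\rho=\frac{4(1+\bar\kappa)}{1+4(1+\bar\kappa)}$. Then for all $k\ge0$, \[ f^*-d(\lambda^{k+1})\le\tfrac12\,\rho^{\,k-1}\,\mathcal R(\lambda^0)^2 . \]
   Context: Standing setup. Consider $\min_{z}\ f(z)=\sum_{i=1}^M f_i(z_i)$ subject to $Az=b$, $Cz\le c$, where $z=(z_1,\dots,z_M)$, $z_i\in\mathbb{R}^{n_i}$, $n=\sum_i n_i$, $A\in\mathbb{R}^{p\times n}$, $C\in\mathbb{R}^{q\times n}$, $b\in\mathbb{R}^p$, $c\in\mathbb{R}^q$, and each $f_i:\mathbb{R}^{n_i}\to\mathbb{R}$ is convex. The rows are partitioned into $\bar M$ blocks: $A$ has blocks $A_{ji}\in\mathbb{R}^{p_j\times n_i}$ and $C$ has blocks $C_{ji}\in\mathbb{R}^{q_j\times n_i}$. A matrix $E\in\{0,1\}^{\bar M\times M}$ is given such that $E_{ji}=0$ implies $A_{ji}=0$ and $C_{ji}=0$; $\bar{\mathcal N}_i=\{j: E_{ji}\neq 0\}$, $\mathcal N_j=\{i:E_{ji}\ne 0\}$. Let $G=\begin{bmatrix}A\\ C\end{bmatrix}$,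 $g=\begin{bmatrix}b\\ c\end{bmatrix}$, $\lambda=(\nu,\mu)$, $\mathbb{D}=\mathbb{R}^p\times\mathbb{R}^q_+$, $\mathcal L(z,\lambda)=f(z)+\langle\lambda,Gz-g\rangle$, $d(\lambda)=\min_{z}\mathcal L(z,\lambda)$, $\nabla d(\lambda)=Gz(\lambda)-g$ with $z(\lambda)$ the unique minimizer of $\mathcal L(\cdot,\lambda)$. $L_{d_i}=\big\|\begin{bmatrix}[A_{ji}]_{j\in\bar{\mathcal N}_i}\\ [C_{ji}]_{j\in\bar{\mathcal N}_i}\end{bmatrix}\big\|^2/\sigma_i$; $W=\mathrm{diag}(W_\nu,W_\mu)$, $W_\nu=\mathrm{diag}\big(\sum_{i\in\mathcal N_j}L_{d_i}I_{p_j};\ j\big)$, $W_\mu=\mathrm{diag}\big(\sum_{i\in\mathcal N_j}L_{d_i}I_{q_j};\ j\big)$, assumed positive definite; $\|x\|_W=\sqrt{x^TWx}$. Assumption 1: (a) each $f_i$ is $\sigma_i$-strongly convex and has $L_i$-Lipschitz gradient; (b) $A$ has full row rank and there is $\tilde z$ with $A\tilde z=b$, $C\tilde z<c$. Then the set $\Lambda^*$ of maximizers of $d$ over $\mathbb D$ is nonempty and bounded, and $\max_{\mathbb D}d=f^*$, the primal optimal value. $[x]^W_S$ is the $\|\cdot\|_W$-projection onto a closed convex set $S$; $[x]_{\mathbb D}$ is the Euclidean projection onto $\mathbb D$ (equal to $[x]^W_{\mathbb D}$ since $W$ is diagonal). Proximal residual: $\nabla^+ d(\lambda)=[\lambda+W^{-1}\nabla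 d(\lambda)]^W_{\mathbb D}-\lambda$. $\mathcal R(\lambda)=\min_{\lambda^*\in\Lambda^*}\|\lambda^*-\lambda\|_W$, $\mathcal T(\lambda)=\max_{\lambda^*\in\Lambda^*}\|\lambda-\lambda^*\|_W$. Algorithm (DG): given $\lambda^0\in\mathbb D$, for $k\ge0$ set $z^k=\arg\min_{z}\mathcal L(z,\lambda^k)$ and $\lambda^{k+1}=[\lambda^k+W^{-1}\nabla d(\lambda^k)]_{\mathbb D}$. *)

theory Defs
  imports "HOL-Analysis.Analysis"
begin

text \<open>Conventions.  Primal variable z :: real^'n (coordinates 'n); the coordinates are
  partitioned into the M blocks z_i by blk :: 'n => 'm.  The constraint rows of
  G = [A; C] are indexed by a single finite type 'r; isEq r says that row r is a row of A
  (equality constraint), otherwise a row of C (inequality constraint).  The rows are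
  partitioned into the Mbar row blocks by rblk :: 'r => 'mb.  E :: 'mb => 'm => bool is the
  0/1 matrix E (E j i = True iff E_ji = 1).  Dual variables lambda = (nu, mu) :: real^'r.\<close>

definition blkproj :: "('n \<Rightarrow> 'm) \<Rightarrow> 'm \<Rightarrow> real^'n \<Rightarrow> real^'n" where
  "blkproj blk i x = (\<chi> j. if blk j = i then x$j else 0)"

text \<open>F, a function of z that depends only on the block z_i, is sigma-strongly convex
  as a function of z_i.\<close>
definition strongly_convex_blk ::
  "('n \<Rightarrow> 'm) \<Rightarrow> 'm \<Rightarrow> real \<Rightarrow> (real^'n \<Rightarrow> real) \<Rightarrow> bool" where
  "strongly_convex_blk blk i \<sigma> F \<longleftrightarrow>
     (\<forall>x y t. 0 \<le> t \<and> t \<le> 1 \<longrightarrow>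
        F (t *\<^sub>R x + (1 - t) *\<^sub>R y) \<le> t * F x + (1 - t) * F y
          - \<sigma> / 2 * t * (1 - t) * (norm (blkproj blk i (x - y)))\<^sup>2)"

text \<open>F, depending only on z_i, has an L-Lipschitz gradient as a function of z_i.\<close>
definition lipschitz_grad_blk ::
  "('n \<Rightarrow> 'm) \<Rightarrow> 'm \<Rightarrow> real \<Rightarrow> (real^'n \<Rightarrow> real) \<Rightarrow> bool" where
  "lipschitz_grad_blk blk i L F \<longleftrightarrow>
     (\<exists>gr. (\<forall>x. (F has_derivative (\<lambda>h. gr x \<bullet> h)) (at x)) \<and>
           (\<forall>x y. norm (gr x - gr y) \<le> L * norm (blkproj blk i (x - y))))"

definition depends_only_on_blk :: "('n \<Rightarrow> 'm) \<Rightarrow> 'm \<Rightarrow> (real^'n \<Rightarrow> real) \<Rightarrow> bool" where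
  "depends_only_on_blk blk i F \<longleftrightarrow>
     (\<forall>x y. (\<forall>j. blk j = i \<longrightarrow> x$j = y$j) \<longrightarrow> F x = F y)"

text \<open>A has full row rank: the rows of A (rows r of G with isEq r) are linearly independent.\<close>
definition full_row_rank_eq :: "('r \<Rightarrow> bool) \<Rightarrow> real^'n^'r \<Rightarrow> bool" where
  "full_row_rank_eq isEq G \<longleftrightarrow>
     (\<forall>\<nu>::real^'r. (\<forall>r. \<not> isEq r \<longrightarrow> \<nu>$r = 0) \<longrightarrow> transpose G *v \<nu> = 0 \<longrightarrow> \<nu> = 0)"

definition feasible :: "('r \<Rightarrow> bool) \<Rightarrow> real^'n^'r \<Rightarrow> real^'r \<Rightarrow> real^'n \<Rightarrow> bool" where
  "feasible isEq G g z \<longleftrightarrow>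
     (\<forall>r. if isEq r then (G *v z)$r = g$r else (G *v z)$r \<le> g$r)"

definition slater :: "('r \<Rightarrow> bool) \<Rightarrow> real^'n^'r \<Rightarrow> real^'r \<Rightarrow> bool" where
  "slater isEq G g \<longleftrightarrow>
     (\<exists>z. \<forall>r. if isEq r then (G *v z)$r = g$r else (G *v z)$r < g$r)"

text \<open>Primal optimal value f^*.\<close>
definition primal_opt ::
  "(real^'n \<Rightarrow> real) \<Rightarrow> ('r \<Rightarrow> bool) \<Rightarrow> real^'n^'r \<Rightarrow> real^'r \<Rightarrow> real" where
  "primal_opt f isEq G g = Inf (f ` {z. feasible isEq G g z})"

text \<open>D = R^p x R^q_+.\<close>
definition dual_dom :: "('r \<Rightarrow> bool) \<Rightarrow> (real^'r) set" where
  "dual_dom isEq = {l. \<forall>r. \<not> isEq r \<longrightarrow> 0 \<le> l$r}"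

text \<open>Euclidean projection onto D.\<close>
definition proj_D :: "('r \<Rightarrow> bool) \<Rightarrow> real^'r \<Rightarrow> real^'r" where
  "proj_D isEq x = (\<chi> r. if isEq r then x$r else max 0 (x$r))"

definition Lag ::
  "(real^'n \<Rightarrow> real) \<Rightarrow> real^'n^'r \<Rightarrow> real^'r \<Rightarrow> real^'n \<Rightarrow> real^'r \<Rightarrow> real" where
  "Lag f G g z l = f z + l \<bullet> (G *v z - g)"

definition dualfun :: "(real^'n \<Rightarrow> real) \<Rightarrow> real^'n^'r \<Rightarrow> real^'r \<Rightarrow> real^'r \<Rightarrow> real" where
  "dualfun f G g l = (INF z. Lag f G g z l)"

text \<open>z(lambda): the unique minimizer of L(., lambda).\<close>
definition zmin :: "(real^'n \<Rightarrow> real) \<Rightarrow> real^'n^'r \<Rightarrow> real^'r \<Rightarrow> real^'r \<Rightarrow> real^'n" where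
  "zmin f G g l = (THE z. \<forall>z'. Lag f G g z l \<le> Lag f G g z' l)"

text \<open>grad d(lambda) = G z(lambda) - g.\<close>
definition dual_grad :: "(real^'n \<Rightarrow> real) \<Rightarrow> real^'n^'r \<Rightarrow> real^'r \<Rightarrow> real^'r \<Rightarrow> real^'r" where
  "dual_grad f G g l = G *v zmin f G g l - g"

text \<open>The diagonal weights: L_{d_i} and the diagonal entries of W.\<close>
definition Ld ::
  "real^'n^'r \<Rightarrow> ('n \<Rightarrow> 'm) \<Rightarrow> ('r \<Rightarrow> 'mb) \<Rightarrow> ('mb \<Rightarrow> 'm \<Rightarrow> bool) \<Rightarrow> ('m \<Rightarrow> real)
     \<Rightarrow> 'm \<Rightarrow> real" where
  "Ld G blk rblk E \<sigma> i =
     (onorm ((*v) (\<chi> r c. if E (rblk r) i \<and> blk c = i then G$r$c else 0)))\<^sup>2 / \<sigma> i"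

definition Wdiag ::
  "real^'n^'r \<Rightarrow> ('n \<Rightarrow> 'm::finite) \<Rightarrow> ('r \<Rightarrow> 'mb) \<Rightarrow> ('mb \<Rightarrow> 'm \<Rightarrow> bool) \<Rightarrow> ('m \<Rightarrow> real)
     \<Rightarrow> 'r \<Rightarrow> real" where
  "Wdiag G blk rblk E \<sigma> r = (\<Sum>i\<in>{i. E (rblk r) i}. Ld G blk rblk E \<sigma> i)"

definition wnorm :: "('r::finite \<Rightarrow> real) \<Rightarrow> real^'r \<Rightarrow> real" where
  "wnorm Wd x = sqrt (\<Sum>r\<in>UNIV. Wd r * (x$r)\<^sup>2)"

text \<open>Proximal residual grad^+ d(lambda) = [lambda + W^{-1} grad d(lambda)]_D - lambda.\<close>
definition prox_res ::
  "(real^'n \<Rightarrow> real) \<Rightarrow> real^'n^'r \<Rightarrow> real^'r \<Rightarrow> ('r \<Rightarrow> real) \<Rightarrow> ('r \<Rightarrow> bool)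
     \<Rightarrow> real^'r \<Rightarrow> real^'r" where
  "prox_res f G g Wd isEq l =
     proj_D isEq (l + (\<chi> r. (dual_grad f G g l)$r / Wd r)) - l"

text \<open>Lambda^*: the set of maximizers of d over D.\<close>
definition dual_opt_set ::
  "(real^'n \<Rightarrow> real) \<Rightarrow> real^'n^'r \<Rightarrow> real^'r \<Rightarrow> ('r \<Rightarrow> bool) \<Rightarrow> (real^'r) set" where
  "dual_opt_set f G g isEq =
     {l\<in>dual_dom isEq. \<forall>\<mu>\<in>dual_dom isEq. dualfun f G g \<mu> \<le> dualfun f G g l}"

text \<open>W-norm projection onto a set S.\<close>
definition wproj :: "('r::finite \<Rightarrow> real) \<Rightarrow> (real^'r) set \<Rightarrow> real^'r \<Rightarrow> real^'r" where
  "wproj Wd S x = (SOME y. y \<in> S \<and> (\<forall>y'\<in>S. wnorm Wd (x - y) \<le> wnorm Wd (x - y')))"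

definition Rdist :: "('r::finite \<Rightarrow> real) \<Rightarrow> (real^'r) set \<Rightarrow> real^'r \<Rightarrow> real" where
  "Rdist Wd S l = Inf ((\<lambda>\<mu>. wnorm Wd (\<mu> - l)) ` S)"

definition Tdist :: "('r::finite \<Rightarrow> real) \<Rightarrow> (real^'r) set \<Rightarrow> real^'r \<Rightarrow> real" where
  "Tdist Wd S l = Sup ((\<lambda>\<mu>. wnorm Wd (l - \<mu>)) ` S)"

end

theory Submission
  imports Defs
begin


definition sc :: "('r::finite \<Rightarrow> real) \<Rightarrow> real^'r \<Rightarrow> real^'r" where
  "sc W x = (\<chi> r. sqrt (W r) * x$r)"

lemma inner_sc: "(\<And>r. 0 \<le> W r) \<Longrightarrow> sc W x \<bullet> sc W y = (\<Sum>r\<in>UNIV. W r * x$r * y$r)"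
  unfolding sc_def inner_vec_def
  by (rule sum.cong) (auto simp: algebra_simps real_sqrt_mult[symmetric])

lemma wnorm_sc: assumes "\<And>r. 0 \<le> W r" shows "wnorm W x = norm (sc W x)"
proof -
  have "(norm (sc W x))\<^sup>2 = sc W x \<bullet> sc W x" by (simp add: power2_norm_eq_inner)
  also have "\<dots> = (\<Sum>r\<in>UNIV. W r * (x$r)\<^sup>2)"
    using inner_sc[of W x x, OF assms] by (simp add: power2_eq_square mult.assoc)
  finally have "(norm (sc W x))\<^sup>2 = (\<Sum>r\<in>UNIV. W r * (x$r)\<^sup>2)" .
  then show ?thesis unfolding wnorm_def by (metis norm_ge_zero real_sqrt_abs abs_of_nonneg)
qed

lemma sc_diff: "sc W (x - y) = sc W x - sc W y"
  by (simp add: sc_def vec_eq_iff algebra_simps)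
lemma sc_add: "sc W (x + y) = sc W x + sc W y"
  by (simp add: sc_def vec_eq_iff algebra_simps)
lemma sc_linear: "linear (sc W)"
  by (rule linearI) (auto simp: sc_def vec_eq_iff algebra_simps)
lemma sc_inj: "(\<And>r. 0 < W r) \<Longrightarrow> inj (sc W)"
  by (rule injI) (auto simp: sc_def vec_eq_iff, metis less_irrefl)

lemma blkproj_sum_sq: "(\<Sum>i\<in>UNIV. (norm (blkproj (blk::'n\<Rightarrow>'m::finite) i x))\<^sup>2) = (norm (x::real^'n))\<^sup>2"
proof -
  have "(\<Sum>i\<in>UNIV. (norm (blkproj blk i x))\<^sup>2) = (\<Sum>i\<in>(UNIV::'m set). \<Sum>c\<in>UNIV. if blk c = i then (x$c)\<^sup>2 else 0)"
    unfolding power2_norm_eq_inner by (rule sum.cong) (auto simp: inner_vec_def blkproj_def power2_eq_square intro!: sum.cong)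
  also have "\<dots> = (\<Sum>c\<in>UNIV. (x$c)\<^sup>2)"
    by (subst sum.swap) simp
  also have "\<dots> = (norm x)\<^sup>2"
    unfolding power2_norm_eq_inner by (simp add: inner_vec_def power2_eq_square)
  finally show ?thesis .
qed

lemma lag_shift: "Lag f G g z m = Lag f G g z l + (m - l) \<bullet> (G *v z - g)"
  by (simp add: Lag_def inner_diff_left)




locale dg =
  fixes fi :: "'m::finite \<Rightarrow> real^'n \<Rightarrow> real"
    and \<sigma> :: "'m \<Rightarrow> real"
    and blk :: "'n \<Rightarrow> 'm"
    and rblk :: "'r::finite \<Rightarrow> 'mb::finite"
    and E :: "'mb \<Rightarrow> 'm \<Rightarrow> bool"
    and isEq :: "'r \<Rightarrow> bool"
    and G :: "real^'n^'r"
    and g :: "real^'r"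
    and zs :: "nat \<Rightarrow> real^'n"
    and lam :: "nat \<Rightarrow> real^'r"
    and \<kappa> \<rho> :: real
    and f :: "real^'n \<Rightarrow> real"
    and Wd :: "'r \<Rightarrow> real"
    and \<Lambda>s :: "(real^'r) set"
  assumes f_def: "f = (\<lambda>z. \<Sum>i\<in>UNIV. fi i z)"
    and Wd_def: "Wd = Wdiag G blk rblk E \<sigma>"
    and \<Lambda>s_def: "\<Lambda>s = dual_opt_set f G g isEq"
    and \<rho>_def: "\<rho> = 4 * (1 + \<kappa>) / (1 + 4 * (1 + \<kappa>))"
    and E_sparsity: "\<And>j i r c. \<not> E j i \<Longrightarrow> rblk r = j \<Longrightarrow> blk c = i \<Longrightarrow> G$r$c = 0"
    and sigma_pos: "\<And>i. \<sigma> i > 0"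
    and strongly_convex: "\<And>i. strongly_convex_blk blk i (\<sigma> i) (fi i)"
    and full_rank: "full_row_rank_eq isEq G"
    and slater: "slater isEq G g"
    and W_pos: "\<And>r. Wd r > 0"
    and lam0: "lam 0 \<in> dual_dom isEq"
    and DG_z: "\<And>k z. Lag f G g (zs k) (lam k) \<le> Lag f G g z (lam k)"
    and DG_lam: "\<And>k. lam (Suc k) =
                   proj_D isEq (lam k + (\<chi> r. (G *v zs k - g)$r / Wd r))"
    and kappa_pos: "\<kappa> > 0"
    and error_bound: "\<And>l. l \<in> dual_dom isEq \<Longrightarrow> Tdist Wd \<Lambda>s l \<le> Tdist Wd \<Lambda>s (lam 0) \<Longrightarrow>
                wnorm Wd (l - wproj Wd \<Lambda>s l) \<le> \<kappa> * wnorm Wd (prox_res f G g Wd isEq l)"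
begin

abbreviation "Lg \<equiv> Lag f G g"
abbreviation "dd \<equiv> dualfun f G g"
abbreviation "SS z' z \<equiv> (\<Sum>i\<in>UNIV. \<sigma> i / 2 * (norm (blkproj blk i (z' - z)))\<^sup>2)"

lemma W_nonneg: "0 \<le> Wd r" using W_pos[of r] by simp

lemma SS_nonneg: "0 \<le> SS z' z"
  using sigma_pos by (intro sum_nonneg) (simp add: less_imp_le)

lemma f_strong:
  assumes "0 \<le> t" "t \<le> 1"
  shows "f (t *\<^sub>R z' + (1-t) *\<^sub>R z) \<le> t * f z' + (1-t) * f z - t*(1-t) * SS z' z"
proof -
  have "f (t *\<^sub>R z' + (1-t) *\<^sub>R z) \<le> (\<Sum>i\<in>UNIV. t * fi i z' + (1-t) * fi i z
           - \<sigma> i / 2 * t * (1 - t) * (norm (blkproj blk i (z' - z)))\<^sup>2)"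
    unfolding f_def using strongly_convex assms
    by (intro sum_mono) (auto simp: strongly_convex_blk_def)
  also have "\<dots> = t * f z' + (1-t) * f z - t*(1-t) * SS z' z"
    unfolding f_def by (simp add: sum.distrib sum_subtractf sum_distrib_left algebra_simps)
  finally show ?thesis .
qed

lemma Lag_strong:
  assumes "0 \<le> t" "t \<le> 1"
  shows "Lg (t *\<^sub>R z' + (1-t) *\<^sub>R z) l \<le> t * Lg z' l + (1-t) * Lg z l - t*(1-t) * SS z' z"
proof -
  have lin: "l \<bullet> (G *v (t *\<^sub>R z' + (1-t) *\<^sub>R z) - g) = t * (l \<bullet> (G *v z' - g)) + (1-t) * (l \<bullet> (G *v z - g))"
    by (simp add: matrix_vector_right_distrib matrix_vector_mult_scaleR inner_add_right inner_diff_right algebra_simps)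
  show ?thesis using f_strong[OF assms, of z' z] unfolding Lag_def lin by (simp add: algebra_simps)
qed

lemma qgrowth:
  assumes min: "\<And>z''. Lg z l \<le> Lg z'' l"
  shows "Lg z l + SS z' z \<le> Lg z' l"
proof -
  define S where "S = SS z' z"
  define D where "D = Lg z' l - Lg z l"
  have S0: "0 \<le> S" unfolding S_def by (rule SS_nonneg)
  have key: "(1-t) * S \<le> D" if "0 < t" "t < 1" for t
  proof -
    have "Lg z l \<le> Lg (t *\<^sub>R z' + (1-t) *\<^sub>R z) l" by (rule min)
    also have "\<dots> \<le> t * Lg z' l + (1-t) * Lg z l - t*(1-t) * S"
      unfolding S_def using that by (intro Lag_strong) auto
    finally have "t * ((1-t) * S) \<le> t * D" unfolding D_def by (simp add: algebra_simps)
    then show ?thesis using that by simp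
  qed
  have D0: "0 \<le> D" using key[of "1/2"] S0 by simp
  have "S \<le> D"
  proof (rule ccontr)
    assume "\<not> S \<le> D"
    then have lt: "D < S" by simp
    define t where "t = (S - D) / (2*S)"
    have Sp: "S > 0" using lt D0 by simp
    have t0: "0 < t" unfolding t_def using lt Sp by simp
    have t1: "t < 1" unfolding t_def using lt Sp D0 by (simp add: field_simps)
    have "(1-t) * S = (S + D)/2" unfolding t_def using Sp by (simp add: field_simps)
    then show False using key[OF t0 t1] lt by simp
  qed
  then show ?thesis unfolding S_def D_def by simp
qed

definition "smin = Min (range \<sigma>)"

lemma smin_pos: "0 < smin"
  unfolding smin_def using sigma_pos by (subst Min_gr_iff) auto

lemma smin_le: "smin \<le> \<sigma> i"
  unfolding smin_def by (rule Min_le) auto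

lemma SS_lower: "smin / 2 * (norm (z' - z))\<^sup>2 \<le> SS z' z"
proof -
  have "(\<Sum>i\<in>UNIV. smin / 2 * (norm (blkproj blk i (z' - z)))\<^sup>2) = smin / 2 * (\<Sum>i\<in>UNIV. (norm (blkproj blk i (z' - z)))\<^sup>2)"
    by (rule sum_distrib_left[symmetric])
  then have "smin / 2 * (norm (z' - z))\<^sup>2 = (\<Sum>i\<in>UNIV. smin / 2 * (norm (blkproj blk i (z' - z)))\<^sup>2)"
    by (simp only: blkproj_sum_sq)
  also have "\<dots> \<le> SS z' z"
    using smin_le by (intro sum_mono mult_right_mono) auto
  finally show ?thesis .
qed

lemma min_unique:
  assumes "\<And>z''. Lg z1 l \<le> Lg z'' l" "\<And>z''. Lg z2 l \<le> Lg z'' l"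
  shows "z1 = z2"
proof -
  have "Lg z1 l + SS z2 z1 \<le> Lg z2 l" by (rule qgrowth[OF assms(1)])
  moreover have "Lg z2 l \<le> Lg z1 l" by (rule assms(2))
  ultimately have "SS z2 z1 \<le> 0" by simp
  then have "smin / 2 * (norm (z2 - z1))\<^sup>2 \<le> 0" using SS_lower[of z2 z1] by simp
  then have "(norm (z2 - z1))\<^sup>2 \<le> 0" using smin_pos by (simp add: mult_le_0_iff)
  then show ?thesis by simp
qed

lemma zmin_eq: "zmin f G g (lam k) = zs k"
  unfolding zmin_def
  by (rule the_equality) (use DG_z min_unique in blast)+

lemma d_lam: "dd (lam k) = Lg (zs k) (lam k)"
  unfolding dualfun_def by (rule cInf_eq_minimum) (use DG_z in auto)

lemma bdd: "bdd_below (range (\<lambda>z. Lg z \<mu>))"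
proof -
  obtain K where K: "K > 0" "\<And>x. norm (G *v x) \<le> norm x * K"
    using bounded_linear.pos_bounded[OF matrix_vector_mul_bounded_linear[of G]] by blast
  define z0 where "z0 = zs 0"
  define m0 where "m0 = Lg z0 (lam 0)"
  define a where "a = smin / 2"
  define b where "b = norm (\<mu> - lam 0) * K"
  define c where "c = norm (\<mu> - lam 0) * norm (G *v z0 - g)"
  have a0: "a > 0" unfolding a_def using smin_pos by simp
  have "m0 - c - b^2 / (4*a) \<le> Lg z \<mu>" for z
  proof -
    define u where "u = norm (z - z0)"
    have q: "Lg z0 (lam 0) + SS z z0 \<le> Lg z (lam 0)"
      by (rule qgrowth) (use DG_z z0_def in auto)
    have q2: "m0 + a * u^2 \<le> Lg z (lam 0)"
      using q SS_lower[of z z0] unfolding m0_def a_def u_def by simp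
    have "norm (G *v z - g) = norm (G *v (z - z0) + (G *v z0 - g))"
      by (simp add: matrix_vector_mult_diff_distrib)
    also have "\<dots> \<le> norm (G *v (z - z0)) + norm (G *v z0 - g)" by (rule norm_triangle_ineq)
    also have "\<dots> \<le> u * K + norm (G *v z0 - g)" using K(2)[of "z - z0"] unfolding u_def by simp
    finally have "norm (G *v z - g) \<le> u * K + norm (G *v z0 - g)" .
    then have "\<bar>(\<mu> - lam 0) \<bullet> (G *v z - g)\<bar> \<le> norm (\<mu> - lam 0) * (u * K + norm (G *v z0 - g))"
      using Cauchy_Schwarz_ineq2[of "\<mu> - lam 0" "G *v z - g"]
      by (meson mult_left_mono norm_ge_zero order_trans)
    then have lin: "(\<mu> - lam 0) \<bullet> (G *v z - g) \<ge> - (b * u + c)"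
      unfolding b_def c_def by (simp add: algebra_simps)
    have sq: "a * u^2 - b * u + b^2 / (4*a) \<ge> 0"
    proof -
      have "a * u^2 - b * u + b^2 / (4*a) = a * (u - b / (2*a))^2"
        using a0 by (simp add: field_simps power2_eq_square)
      then show ?thesis using a0 by simp
    qed
    have "Lg z \<mu> = Lg z (lam 0) + (\<mu> - lam 0) \<bullet> (G *v z - g)" by (rule lag_shift)
    then show ?thesis using q2 lin sq by linarith
  qed
  then show ?thesis by (intro bdd_belowI2) 
qed

lemma d_le_Lag: "dd \<mu> \<le> Lg z \<mu>"
  unfolding dualfun_def by (rule cINF_lower[OF bdd]) simp

lemma d_ge: "(\<And>z. c \<le> Lg z \<mu>) \<Longrightarrow> c \<le> dd \<mu>"
  unfolding dualfun_def by (rule cINF_greatest) auto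

end



context dg begin

definition "Gm i = (\<chi> r c. if E (rblk r) i \<and> blk c = i then G$r$c else 0)"
definition "rho (x::real^'r) i = (\<chi> r. if E (rblk r) i then x$r else 0)"

lemma Gsp: "\<not> E (rblk r) (blk c) \<Longrightarrow> G$r$c = 0"
  using E_sparsity by blast

lemma cross_split:
  "x \<bullet> (G *v w) = (\<Sum>i\<in>UNIV. rho x i \<bullet> (Gm i *v blkproj blk i w))"
proof -
  have z: "(\<Sum>c\<in>UNIV. if blk c = i then x$r * G$r$c * w$c else 0) = 0" if "\<not> E (rblk r) i" for i r
    by (intro sum.neutral) (auto simp: Gsp that)
  have "(\<Sum>i\<in>UNIV. rho x i \<bullet> (Gm i *v blkproj blk i w))
     = (\<Sum>i\<in>UNIV. \<Sum>r\<in>UNIV. \<Sum>c\<in>UNIV. if blk c = i then x$r * G$r$c * w$c else 0)"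
    unfolding inner_vec_def matrix_vector_mult_def blkproj_def rho_def Gm_def
    by (intro sum.cong refl) (auto simp: sum_distrib_left Gsp z intro!: sum.cong)
  also have "\<dots> = (\<Sum>r\<in>UNIV. \<Sum>i\<in>UNIV. \<Sum>c\<in>UNIV. if blk c = i then x$r * G$r$c * w$c else 0)"
    by (rule sum.swap)
  also have "\<dots> = (\<Sum>r\<in>UNIV. \<Sum>c\<in>UNIV. \<Sum>i\<in>UNIV. if blk c = i then x$r * G$r$c * w$c else 0)"
    by (intro sum.cong refl) (rule sum.swap)
  also have "\<dots> = (\<Sum>r\<in>UNIV. \<Sum>c\<in>UNIV. x$r * G$r$c * w$c)"
    by simp
  also have "\<dots> = x \<bullet> (G *v w)"
    unfolding inner_vec_def matrix_vector_mult_def by (simp add: sum_distrib_left mult.assoc)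
  finally show ?thesis by simp
qed

lemma Ld_eq: "Ld G blk rblk E \<sigma> i = (onorm ((*v) (Gm i)))\<^sup>2 / \<sigma> i"
  unfolding Ld_def Gm_def ..

lemma cross_i:
  "rho x i \<bullet> (Gm i *v v) \<ge> - (\<sigma> i / 2 * (norm v)\<^sup>2) - Ld G blk rblk E \<sigma> i / 2 * (norm (rho x i))\<^sup>2"
proof -
  define on where "on = onorm ((*v) (Gm i))"
  have on0: "0 \<le> on" unfolding on_def by (rule onorm_pos_le) simp
  have "\<bar>rho x i \<bullet> (Gm i *v v)\<bar> \<le> norm (rho x i) * norm (Gm i *v v)" by (rule Cauchy_Schwarz_ineq2)
  also have "\<dots> \<le> norm (rho x i) * (on * norm v)"
    unfolding on_def by (intro mult_left_mono onorm) auto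
  finally have ab: "rho x i \<bullet> (Gm i *v v) \<ge> - ((on * norm (rho x i)) * norm v)" by (simp add: algebra_simps)
  define a where "a = on * norm (rho x i)"
  define b where "b = norm v"
  have sp: "\<sigma> i > 0" by (rule sigma_pos)
  have "a * b \<le> \<sigma> i / 2 * b^2 + a^2 / (2 * \<sigma> i)"
  proof -
    have "\<sigma> i / 2 * b^2 + a^2 / (2 * \<sigma> i) - a * b = (\<sigma> i * b - a)^2 / (2 * \<sigma> i)"
      using sp by (simp add: field_simps power2_eq_square)
    then show ?thesis using sp by (metis diff_ge_0_iff_ge half_gt_zero_iff divide_nonneg_pos zero_le_power2 mult_pos_pos zero_less_numeral)
  qed
  moreover have "a^2 / (2 * \<sigma> i) = Ld G blk rblk E \<sigma> i / 2 * (norm (rho x i))\<^sup>2"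
    unfolding Ld_eq a_def on_def by (simp add: power_mult_distrib)
  ultimately show ?thesis using ab unfolding a_def b_def by linarith
qed

lemma rho_sum: "(\<Sum>i\<in>UNIV. Ld G blk rblk E \<sigma> i / 2 * (norm (rho x i))\<^sup>2) = 1/2 * (\<Sum>r\<in>UNIV. Wd r * (x$r)\<^sup>2)"
proof -
  have "(\<Sum>i\<in>UNIV. Ld G blk rblk E \<sigma> i / 2 * (norm (rho x i))\<^sup>2)
      = (\<Sum>i\<in>UNIV. \<Sum>r\<in>UNIV. 1/2 * (if E (rblk r) i then Ld G blk rblk E \<sigma> i * (x$r)\<^sup>2 else 0))"
    unfolding power2_norm_eq_inner inner_vec_def rho_def
    by (intro sum.cong refl) (auto simp: sum_distrib_left power2_eq_square intro!: sum.cong)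
  also have "\<dots> = (\<Sum>r\<in>UNIV. \<Sum>i\<in>UNIV. 1/2 * (if E (rblk r) i then Ld G blk rblk E \<sigma> i * (x$r)\<^sup>2 else 0))"
    by (rule sum.swap)
  also have "\<dots> = (\<Sum>r\<in>UNIV. 1/2 * (Wd r * (x$r)\<^sup>2))"
  proof (intro sum.cong refl)
    fix r
    have "Wd r = (\<Sum>i\<in>UNIV. if E (rblk r) i then Ld G blk rblk E \<sigma> i else 0)"
      unfolding Wd_def Wdiag_def by (simp add: sum.If_cases)
    moreover have "(\<Sum>i\<in>UNIV. 1/2 * (if E (rblk r) i then Ld G blk rblk E \<sigma> i * (x$r)\<^sup>2 else 0))
       = (\<Sum>i\<in>UNIV. (if E (rblk r) i then Ld G blk rblk E \<sigma> i else 0) * ((x$r)\<^sup>2/2))"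
      by (intro sum.cong) auto
    moreover have "\<dots> = (\<Sum>i\<in>UNIV. (if E (rblk r) i then Ld G blk rblk E \<sigma> i else 0)) * ((x$r)\<^sup>2/2)"
      by (rule sum_distrib_right[symmetric])
    ultimately show "(\<Sum>i\<in>UNIV. 1/2 * (if E (rblk r) i then Ld G blk rblk E \<sigma> i * (x$r)\<^sup>2 else 0)) = 1/2 * (Wd r * (x$r)\<^sup>2)"
      by simp
  qed
  also have "\<dots> = 1/2 * (\<Sum>r\<in>UNIV. Wd r * (x$r)\<^sup>2)" by (simp add: sum_distrib_left)
  finally show ?thesis .
qed

lemma cross:
  "x \<bullet> (G *v w) \<ge> - (\<Sum>i\<in>UNIV. \<sigma> i / 2 * (norm (blkproj blk i w))\<^sup>2) - 1/2 * (\<Sum>r\<in>UNIV. Wd r * (x$r)\<^sup>2)"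
proof -
  have "x \<bullet> (G *v w) \<ge> (\<Sum>i\<in>UNIV. - (\<sigma> i / 2 * (norm (blkproj blk i w))\<^sup>2) - Ld G blk rblk E \<sigma> i / 2 * (norm (rho x i))\<^sup>2)"
    unfolding cross_split by (intro sum_mono cross_i)
  also have "(\<Sum>i\<in>UNIV. - (\<sigma> i / 2 * (norm (blkproj blk i w))\<^sup>2) - Ld G blk rblk E \<sigma> i / 2 * (norm (rho x i))\<^sup>2)
     = - (\<Sum>i\<in>UNIV. \<sigma> i / 2 * (norm (blkproj blk i w))\<^sup>2) - 1/2 * (\<Sum>r\<in>UNIV. Wd r * (x$r)\<^sup>2)"
    by (simp only: sum_subtractf sum_negf rho_sum)
  finally show ?thesis .
qed

lemma smooth:
  assumes min: "\<And>z''. Lg z l \<le> Lg z'' l"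
  shows "Lg z l + (l' - l) \<bullet> (G *v z - g) - 1/2 * (\<Sum>r\<in>UNIV. Wd r * ((l' - l)$r)\<^sup>2) \<le> Lg z' l'"
proof -
  have "Lg z' l' = Lg z' l + (l' - l) \<bullet> (G *v z' - g)" by (rule lag_shift)
  moreover have "(l' - l) \<bullet> (G *v z' - g) = (l' - l) \<bullet> (G *v z - g) + (l' - l) \<bullet> (G *v (z' - z))"
    by (simp add: matrix_vector_mult_diff_distrib inner_diff_right)
  moreover note qgrowth[OF min, of z'] cross[where x="l' - l" and w="z' - z"]
  ultimately show ?thesis by linarith
qed

end



lemma coef_nonpos:
  fixes a b c :: real
  assumes "\<And>s. 0 \<le> s \<Longrightarrow> c + s * a \<le> b"
  shows "a \<le> 0"
proof (rule ccontr)
  assume "\<not> a \<le> 0"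
  then have a: "a > 0" by simp
  have "c + ((\<bar>b - c\<bar> + 1) / a) * a \<le> b" by (rule assms) (use a in simp)
  then show False using a by simp
qed

context dg begin

abbreviation "fs \<equiv> primal_opt f isEq G g"
abbreviation "DD \<equiv> dual_dom isEq"

lemma slater_pt: obtains zt where "\<And>r. isEq r \<Longrightarrow> (G *v zt)$r = g$r" "\<And>r. \<not> isEq r \<Longrightarrow> (G *v zt)$r < g$r"
proof -
  obtain z where h: "\<forall>r. if isEq r then (G *v z)$r = g$r else (G *v z)$r < g$r"
    using slater unfolding slater_def by blast
  show thesis
  proof (rule that[of z])
    fix r assume "isEq r" then show "(G *v z)$r = g$r" using h by (auto dest: spec[where x=r])
  next
    fix r assume "\<not> isEq r" then show "(G *v z)$r < g$r" using h by (auto dest: spec[where x=r])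
  qed
qed

lemma feas_ne: "{z. feasible isEq G g z} \<noteq> {}"
proof -
  obtain zt where "\<And>r. isEq r \<Longrightarrow> (G *v zt)$r = g$r" "\<And>r. \<not> isEq r \<Longrightarrow> (G *v zt)$r < g$r"
    using slater_pt by blast
  then have "feasible isEq G g zt" unfolding feasible_def by (auto simp: less_imp_le)
  then show ?thesis by blast
qed

lemma Lag_le_f: assumes "\<mu> \<in> DD" "feasible isEq G g z" shows "Lg z \<mu> \<le> f z"
proof -
  have "\<mu> \<bullet> (G *v z - g) = (\<Sum>r\<in>UNIV. \<mu>$r * (G *v z - g)$r)" by (simp add: inner_vec_def)
  also have "\<dots> \<le> 0"
  proof (intro sum_nonpos)
    fix r
    show "\<mu>$r * (G *v z - g)$r \<le> 0"
    proof (cases "isEq r")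
      case True
      then have "(G *v z)$r = g$r" using assms(2) unfolding feasible_def by (auto dest: spec[where x=r])
      then show ?thesis by simp
    next
      case False
      then have "(G *v z)$r \<le> g$r" "0 \<le> \<mu>$r" using assms unfolding feasible_def dual_dom_def by (auto dest: spec[where x=r])
      then show ?thesis by (simp add: mult_nonneg_nonpos)
    qed
  qed
  finally show ?thesis unfolding Lag_def by simp
qed

lemma f_bdd: "bdd_below (f ` {z. feasible isEq G g z})"
proof (rule bdd_belowI2)
  fix z assume "z \<in> {z. feasible isEq G g z}"
  then have "Lg z (lam 0) \<le> f z" using Lag_le_f lam0 by auto
  then show "dd (lam 0) \<le> f z" using d_le_Lag[of "lam 0" z] by simp
qed

lemma weak: "\<mu> \<in> DD \<Longrightarrow> dd \<mu> \<le> fs"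
  unfolding primal_opt_def
proof (rule cInf_greatest)
  show "f ` {z. feasible isEq G g z} \<noteq> {}" using feas_ne by blast
next
  fix y assume "\<mu> \<in> DD" "y \<in> f ` {z. feasible isEq G g z}"
  then obtain z where "feasible isEq G g z" "y = f z" by auto
  then show "dd \<mu> \<le> y" using d_le_Lag[of \<mu> z] Lag_le_f[OF \<open>\<mu> \<in> DD\<close>] by force
qed

lemma fs_le: "feasible isEq G g z \<Longrightarrow> fs \<le> f z"
  unfolding primal_opt_def by (rule cInf_lower) (use f_bdd in auto)

lemma strong: "\<exists>ls\<in>DD. \<forall>z. fs \<le> Lg z ls"
proof -
  define Sset :: "((real^'r) \<times> real) set" where "Sset = {(v,t). \<exists>z. f z \<le> t \<and>
       (\<forall>r. isEq r \<longrightarrow> v$r = (G *v z - g)$r) \<and> (\<forall>r. \<not> isEq r \<longrightarrow> (G *v z - g)$r \<le> v$r)}"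
  define Tset :: "((real^'r) \<times> real) set" where "Tset = {(v,t). v = 0 \<and> t < fs}"
  have memS: "(G *v z - g, f z) \<in> Sset" for z unfolding Sset_def by auto
  have cS: "convex Sset"
  proof (rule convexI)
    fix x y :: "(real^'r) \<times> real" and u w :: real
    assume x: "x \<in> Sset" and y: "y \<in> Sset" and u: "0 \<le> u" and w: "0 \<le> w" and uw: "u + w = 1"
    obtain v1 t1 z1 where x1: "x = (v1, t1)" "f z1 \<le> t1" "\<forall>r. isEq r \<longrightarrow> v1$r = (G *v z1 - g)$r"
       "\<forall>r. \<not> isEq r \<longrightarrow> (G *v z1 - g)$r \<le> v1$r" using x unfolding Sset_def by auto
    obtain v2 t2 z2 where y2: "y = (v2, t2)" "f z2 \<le> t2" "\<forall>r. isEq r \<longrightarrow> v2$r = (G *v z2 - g)$r"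
       "\<forall>r. \<not> isEq r \<longrightarrow> (G *v z2 - g)$r \<le> v2$r" using y unfolding Sset_def by auto
    define z where "z = u *\<^sub>R z1 + (1-u) *\<^sub>R z2"
    have w1: "w = 1 - u" using uw by simp
    have "f z \<le> u * f z1 + (1-u) * f z2 - u*(1-u) * SS z1 z2"
      unfolding z_def using u uw w by (intro f_strong) auto
    moreover have "0 \<le> u*(1-u) * SS z1 z2" using u w w1 SS_nonneg by simp
    moreover have "u * f z1 \<le> u * t1" using x1(2) u by (rule mult_left_mono)
    moreover have "w * f z2 \<le> w * t2" using y2(2) w by (rule mult_left_mono)
    ultimately have fz: "f z \<le> u * t1 + w * t2" unfolding w1 by linarith
    have comp: "(G *v z - g)$r = u * (G *v z1 - g)$r + w * (G *v z2 - g)$r" for r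
      unfolding z_def w1 by (simp add: matrix_vector_right_distrib matrix_vector_mult_scaleR algebra_simps)
    have eq: "u *\<^sub>R x + w *\<^sub>R y = (u *\<^sub>R v1 + w *\<^sub>R v2, u * t1 + w * t2)"
      using x1(1) y2(1) by simp
    have A: "\<forall>r. isEq r \<longrightarrow> (u *\<^sub>R v1 + w *\<^sub>R v2)$r = (G *v z - g)$r"
      using x1(3) y2(3) comp by simp
    have B: "\<forall>r. \<not> isEq r \<longrightarrow> (G *v z - g)$r \<le> (u *\<^sub>R v1 + w *\<^sub>R v2)$r"
      using x1(4) y2(4) comp u w by (auto intro!: add_mono mult_left_mono)
    show "u *\<^sub>R x + w *\<^sub>R y \<in> Sset" unfolding eq Sset_def mem_Collect_eq case_prod_conv
      using A B fz by (intro exI[where x=z]) simp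
  qed
  have cT: "convex Tset"
  proof (rule convexI)
    fix x y :: "(real^'r) \<times> real" and u w :: real
    assume x: "x \<in> Tset" and y: "y \<in> Tset" and u: "0 \<le> u" and w: "0 \<le> w" and uw: "u + w = 1"
    obtain t1 t2 where xy: "x = (0, t1)" "y = (0, t2)" "t1 < fs" "t2 < fs" using x y unfolding Tset_def by auto
    have "u * t1 + w * t2 < fs"
    proof (cases "u = 0")
      case True then show ?thesis using uw xy by simp
    next
      case False
      then have "u * t1 < u * fs" using u xy by (simp add: mult_strict_left_mono)
      moreover have "w * t2 \<le> w * fs" using w xy by (simp add: mult_left_mono)
      ultimately show ?thesis using uw by (metis add_less_le_mono distrib_right mult_1)
    qed
    then show "u *\<^sub>R x + w *\<^sub>R y \<in> Tset" unfolding Tset_def using xy by simp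
  qed
  have neS: "Sset \<noteq> {}" using memS by blast
  have neT: "Tset \<noteq> {}" unfolding Tset_def by (auto intro: exI[of _ "fs - 1"])
  have disj: "Sset \<inter> Tset = {}"
  proof (rule ccontr)
    assume "Sset \<inter> Tset \<noteq> {}"
    then obtain t z where "f z \<le> t" "t < fs" "\<forall>r. isEq r \<longrightarrow> 0 = (G *v z - g)$r"
      "\<forall>r. \<not> isEq r \<longrightarrow> (G *v z - g)$r \<le> 0" unfolding Sset_def Tset_def by auto
    then have "feasible isEq G g z" "f z < fs" unfolding feasible_def by auto
    then show False using fs_le by fastforce
  qed
  obtain a b where ab: "a \<noteq> 0" "\<And>x. x \<in> Sset \<Longrightarrow> inner a x \<le> b" "\<And>x. x \<in> Tset \<Longrightarrow> inner a x \<ge> b"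
    using separating_hyperplane_sets[OF cS cT neS neT disj] by blast
  obtain av \<beta> where a: "a = (av, \<beta>)" by (cases a)
  obtain zt where zt: "\<And>r. isEq r \<Longrightarrow> (G *v zt)$r = g$r" "\<And>r. \<not> isEq r \<Longrightarrow> (G *v zt)$r < g$r"
    using slater_pt by blast
  define v0 where "v0 = G *v zt - g"
  have Sz: "av \<bullet> (G *v z - g) + \<beta> * f z \<le> b" for z using ab(2)[OF memS[of z]] a by simp
  have T: "\<beta> * t \<ge> b" if "t < fs" for t using ab(3)[of "(0,t)"] that a unfolding Tset_def by simp
  have \<beta>0: "\<beta> \<le> 0"
  proof (rule coef_nonpos)
    fix s :: real assume "0 \<le> s"
    then have "(v0, f zt + s) \<in> Sset" unfolding Sset_def v0_def by (auto intro!: exI[where x=zt])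
    then have "av \<bullet> v0 + \<beta> * (f zt + s) \<le> b" using ab(2) a by fastforce
    then show "(av \<bullet> v0 + \<beta> * f zt) + s * \<beta> \<le> b" by (simp add: algebra_simps)
  qed
  have avr: "av$r \<le> 0" if r: "\<not> isEq r" for r
  proof (rule coef_nonpos)
    fix s :: real assume s: "0 \<le> s"
    have "(v0 + axis r s, f zt) \<in> Sset" unfolding Sset_def v0_def
      using r s by (auto simp: axis_def intro!: exI[where x=zt])
    then have "av \<bullet> (v0 + axis r s) + \<beta> * f zt \<le> b" using ab(2) a by fastforce
    then show "(av \<bullet> v0 + \<beta> * f zt) + s * av$r \<le> b" by (simp add: inner_add_right inner_axis algebra_simps)
  qed
  have \<beta>ne: "\<beta> \<noteq> 0"
  proof
    assume b0: "\<beta> = 0"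
    have bn: "b \<le> 0" using T[of "fs - 1"] b0 by simp
    have "av \<bullet> v0 \<le> 0" using Sz[of zt] b0 bn unfolding v0_def by simp
    moreover have terms: "\<forall>r\<in>UNIV. 0 \<le> av$r * v0$r"
    proof
      fix r :: 'r
      show "0 \<le> av$r * v0$r"
      proof (cases "isEq r")
        case True then show ?thesis using zt(1)[of r] unfolding v0_def by simp
      next
        case False then show ?thesis using zt(2)[of r] avr[of r] unfolding v0_def
          by (simp add: mult_nonpos_nonpos)
      qed
    qed
    ultimately have "(\<Sum>r\<in>UNIV. av$r * v0$r) = 0"
    proof -
      assume a1: "av \<bullet> v0 \<le> 0" and a2: "\<forall>r\<in>UNIV. 0 \<le> av$r * v0$r"
      have "0 \<le> (\<Sum>r\<in>UNIV. av$r * v0$r)" using a2 by (intro sum_nonneg) auto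
      moreover have "(\<Sum>r\<in>UNIV. av$r * v0$r) \<le> 0" using a1 by (simp add: inner_vec_def)
      ultimately show ?thesis by simp
    qed
    then have z0: "\<forall>r\<in>UNIV. av$r * v0$r = 0" using terms by (simp add: sum_nonneg_eq_0_iff)
    have avne: "av$r = 0" if "\<not> isEq r" for r
      using z0 zt(2)[OF that] unfolding v0_def by auto
    define y where "y = transpose G *v av"
    have yz: "av \<bullet> (G *v z) = y \<bullet> z" for z
      unfolding y_def by (simp add: dot_lmul_matrix)
    have "(norm y)\<^sup>2 \<le> 0"
    proof -
      have "(0 - (b + av \<bullet> g)) + s * (norm y)\<^sup>2 \<le> 0" if "0 \<le> s" for s
        using Sz[of "s *\<^sub>R y"] b0 yz[of y]
        by (simp add: inner_diff_right power2_norm_eq_inner algebra_simps)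
      then show ?thesis by (rule coef_nonpos)
    qed
    then have "y = 0" by simp
    then have "av = 0" using full_rank avne unfolding full_row_rank_eq_def y_def by blast
    then show False using ab(1) a b0 by (simp add: zero_prod_def)
  qed
  have \<beta>neg: "\<beta> < 0" using \<beta>0 \<beta>ne by simp
  define ls where "ls = (1 / \<beta>) *\<^sub>R av"
  have lsD: "ls \<in> DD" unfolding dual_dom_def ls_def using avr \<beta>neg
    by (auto simp: divide_nonpos_neg)
  have "fs \<le> Lg z ls" for z
  proof (rule dense_le)
    fix t assume t: "t < fs"
    have "\<beta> * t \<ge> b" by (rule T[OF t])
    also have "b \<ge> av \<bullet> (G *v z - g) + \<beta> * f z" by (rule Sz)
    finally have "\<beta> * t \<ge> \<beta> * Lg z ls"
      unfolding Lag_def ls_def using \<beta>neg by (simp add: algebra_simps)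
    then show "t \<le> Lg z ls" using \<beta>neg by simp
  qed
  then show ?thesis using lsD by blast
qed

lemma Lams_char: "\<Lambda>s = {l\<in>DD. \<forall>z. fs \<le> Lg z l}"
proof -
  obtain ls where ls: "ls \<in> DD" "\<And>z. fs \<le> Lg z ls" using strong by blast
  have dls: "fs \<le> dd ls" by (rule d_ge) (rule ls(2))
  show ?thesis
    unfolding \<Lambda>s_def dual_opt_set_def
  proof (intro set_eqI iffI)
    fix l assume "l \<in> {l\<in>DD. \<forall>\<mu>\<in>DD. dd \<mu> \<le> dd l}"
    then have "l \<in> DD" "dd ls \<le> dd l" using ls(1) by auto
    then show "l \<in> {l\<in>DD. \<forall>z. fs \<le> Lg z l}"
      using dls d_le_Lag[of l] by (auto intro: order_trans)
  next
    fix l assume "l \<in> {l\<in>DD. \<forall>z. fs \<le> Lg z l}"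
    then have "l \<in> DD" "fs \<le> dd l" using d_ge by auto
    then show "l \<in> {l\<in>DD. \<forall>\<mu>\<in>DD. dd \<mu> \<le> dd l}" using weak by (auto intro: order_trans)
  qed
qed

lemma Lams_d: "l \<in> \<Lambda>s \<Longrightarrow> dd l = fs"
  unfolding Lams_char using weak d_ge by (auto intro: order_antisym)

lemma Lams_ne: "\<Lambda>s \<noteq> {}"
  unfolding Lams_char using strong by blast

lemma Lams_closed: "closed \<Lambda>s"
proof -
  have "\<Lambda>s = (\<Inter>r\<in>{r. \<not> isEq r}. {l. 0 \<le> l$r}) \<inter> (\<Inter>z. {l. fs \<le> f z + l \<bullet> (G *v z - g)})"
    unfolding Lams_char dual_dom_def Lag_def by auto
  also have "closed \<dots>"
    by (intro closed_Int closed_INT ballI closed_Collect_le continuous_intros)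
  finally show ?thesis .
qed

end



lemma Sup_unbdd_eq:
  fixes X Y :: "real set"
  assumes "\<not> bdd_above X" "\<not> bdd_above Y"
  shows "Sup X = Sup Y"
proof -
  have h1: "\<not> (\<forall>x\<in>X. x \<le> z)" for z using assms(1) unfolding bdd_above_def by auto
  have h2: "\<not> (\<forall>x\<in>Y. x \<le> z)" for z using assms(2) unfolding bdd_above_def by auto
  have "(\<lambda>z. \<forall>x\<in>X. x \<le> z) = (\<lambda>z. \<forall>x\<in>Y. x \<le> z)"
  proof (rule ext)
    fix z show "(\<forall>x\<in>X. x \<le> z) = (\<forall>x\<in>Y. x \<le> z)" using h1[of z] h2[of z] by blast
  qed
  then show ?thesis unfolding Sup_real_def by simp
qed

context dg begin

definition "dl k = lam (Suc k) - lam k"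
definition "gr k = G *v zs k - g"
abbreviation "scW \<equiv> sc Wd"

lemma sc_zero: "sc W 0 = 0" by (simp add: sc_def vec_eq_iff)

lemma wn: "wnorm Wd x = norm (scW x)"
  by (rule wnorm_sc) (rule W_nonneg)

lemma lamD: "lam k \<in> DD"
proof (cases k)
  case 0 then show ?thesis using lam0 by simp
next
  case (Suc j) then show ?thesis unfolding dual_dom_def by (simp add: DG_lam proj_D_def)
qed

lemma proj_ineq:
  assumes "\<mu> \<in> DD"
  shows "gr k \<bullet> (\<mu> - lam (Suc k)) \<le> (\<Sum>r\<in>UNIV. Wd r * (dl k)$r * (\<mu> - lam (Suc k))$r)"
  unfolding inner_vec_def inner_real_def
proof (rule sum_mono)
  fix r assume "r \<in> (UNIV::'r set)"
  have W: "Wd r > 0" by (rule W_pos)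
  define x where "x = (lam k)$r + (gr k)$r / Wd r"
  have lp: "(lam (Suc k))$r = (if isEq r then x else max 0 x)"
    unfolding DG_lam proj_D_def x_def gr_def by simp
  have gx: "(gr k)$r = Wd r * (x - (lam k)$r)" unfolding x_def using W by (simp add: field_simps)
  show "(gr k)$r * (\<mu> - lam (Suc k))$r \<le> Wd r * (dl k)$r * (\<mu> - lam (Suc k))$r"
  proof (cases "isEq r \<or> 0 \<le> x")
    case True
    then have "(lam (Suc k))$r = x" using lp by auto
    then show ?thesis unfolding dl_def gx by simp
  next
    case False
    then have l0: "(lam (Suc k))$r = 0" and xn: "x < 0" and ne: "\<not> isEq r" using lp by auto
    have "0 \<le> \<mu>$r" using assms ne unfolding dual_dom_def by auto
    then have "Wd r * x * \<mu>$r \<le> 0" using W xn by (simp add: mult_nonpos_nonneg mult_pos_neg less_imp_le)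
    then show ?thesis unfolding dl_def gx using l0 by (simp add: algebra_simps)
  qed
qed

lemma three_point:
  assumes "\<mu> \<in> DD"
  shows "dd \<mu> - dd (lam (Suc k)) \<le> - (scW (lam k - \<mu>) \<bullet> scW (dl k)) - 1/2 * (norm (scW (dl k)))\<^sup>2"
proof -
  have a: "dd \<mu> \<le> dd (lam k) + (\<mu> - lam k) \<bullet> gr k"
    using d_le_Lag[of \<mu> "zs k"] lag_shift[of f G g "zs k" \<mu> "lam k"] d_lam[of k] unfolding gr_def by simp
  have b: "dd (lam k) + dl k \<bullet> gr k - 1/2 * (\<Sum>r\<in>UNIV. Wd r * ((dl k)$r)\<^sup>2) \<le> dd (lam (Suc k))"
    using smooth[of "zs k" "lam k" "lam (Suc k)" "zs (Suc k)"] DG_z d_lam[of k] d_lam[of "Suc k"]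
    unfolding dl_def gr_def by simp
  have c: "gr k \<bullet> (\<mu> - lam (Suc k)) \<le> scW (dl k) \<bullet> scW (\<mu> - lam (Suc k))"
    using proj_ineq[OF assms, of k] inner_sc[of Wd "dl k" "\<mu> - lam (Suc k)", OF W_nonneg] by simp
  have n2: "(\<Sum>r\<in>UNIV. Wd r * ((dl k)$r)\<^sup>2) = (norm (scW (dl k)))\<^sup>2"
    unfolding power2_norm_eq_inner using inner_sc[of Wd "dl k" "dl k", OF W_nonneg]
    by (simp add: power2_eq_square mult.assoc)
  have e0: "(\<mu> - lam k) \<bullet> gr k - dl k \<bullet> gr k = (\<mu> - lam (Suc k)) \<bullet> gr k"
    unfolding dl_def inner_diff_left[symmetric] by (simp add: algebra_simps)
  have e: "(\<mu> - lam k) \<bullet> gr k - dl k \<bullet> gr k = gr k \<bullet> (\<mu> - lam (Suc k))"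
    using e0 inner_commute by metis
  have s: "scW (\<mu> - lam (Suc k)) = - scW (lam k - \<mu>) - scW (dl k)"
    unfolding dl_def sc_def by (simp add: vec_eq_iff algebra_simps)
  have "dd \<mu> - dd (lam (Suc k)) \<le> scW (dl k) \<bullet> scW (\<mu> - lam (Suc k)) + 1/2 * (norm (scW (dl k)))\<^sup>2"
    using a b c e n2 by linarith
  also have "\<dots> = - (scW (lam k - \<mu>) \<bullet> scW (dl k)) - 1/2 * (norm (scW (dl k)))\<^sup>2"
    unfolding s by (simp add: inner_diff_right inner_minus_right power2_norm_eq_inner inner_commute)
  finally show ?thesis .
qed

lemma descent: "1/2 * (norm (scW (dl k)))\<^sup>2 \<le> dd (lam (Suc k)) - dd (lam k)"
  using three_point[OF lamD[of k], of k] by (simp add: sc_zero)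

lemma fejer_step:
  assumes "\<mu> \<in> \<Lambda>s"
  shows "norm (scW (lam (Suc k) - \<mu>)) \<le> norm (scW (lam k - \<mu>))"
proof -
  have \<mu>D: "\<mu> \<in> DD" using assms unfolding Lams_char by auto
  have "0 \<le> dd \<mu> - dd (lam (Suc k))" using Lams_d[OF assms] weak[OF lamD] by simp
  also have "\<dots> \<le> - (scW (lam k - \<mu>) \<bullet> scW (dl k)) - 1/2 * (norm (scW (dl k)))\<^sup>2"
    by (rule three_point[OF \<mu>D])
  finally have h: "0 \<le> - (scW (lam k - \<mu>) \<bullet> scW (dl k)) - 1/2 * (norm (scW (dl k)))\<^sup>2" .
  have s: "scW (lam (Suc k) - \<mu>) = scW (lam k - \<mu>) + scW (dl k)"
    unfolding dl_def sc_def by (simp add: vec_eq_iff algebra_simps)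
  have "(norm (scW (lam (Suc k) - \<mu>)))\<^sup>2 = (norm (scW (lam k - \<mu>)))\<^sup>2 + 2 * (scW (lam k - \<mu>) \<bullet> scW (dl k)) + (norm (scW (dl k)))\<^sup>2"
    unfolding s by (simp add: power2_norm_eq_inner inner_add_left inner_add_right inner_commute)
  then have "(norm (scW (lam (Suc k) - \<mu>)))\<^sup>2 \<le> (norm (scW (lam k - \<mu>)))\<^sup>2" using h by linarith
  then show ?thesis by (rule power2_le_imp_le) simp
qed

lemma fejer: "\<mu> \<in> \<Lambda>s \<Longrightarrow> norm (scW (lam k - \<mu>)) \<le> norm (scW (lam 0 - \<mu>))"
  by (induction k) (auto intro: order_trans[OF fejer_step])

lemma Tdist_le: "Tdist Wd \<Lambda>s (lam k) \<le> Tdist Wd \<Lambda>s (lam 0)"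
proof (cases "bdd_above ((\<lambda>\<mu>. wnorm Wd (lam 0 - \<mu>)) ` \<Lambda>s)")
  case True
  show ?thesis unfolding Tdist_def
    by (rule cSUP_mono[OF Lams_ne True]) (use fejer wn in auto)
next
  case False
  have "\<not> bdd_above ((\<lambda>\<mu>. wnorm Wd (lam k - \<mu>)) ` \<Lambda>s)"
  proof
    assume "bdd_above ((\<lambda>\<mu>. wnorm Wd (lam k - \<mu>)) ` \<Lambda>s)"
    then obtain M where M: "\<And>\<mu>. \<mu> \<in> \<Lambda>s \<Longrightarrow> wnorm Wd (lam k - \<mu>) \<le> M" unfolding bdd_above_def by auto
    have "wnorm Wd (lam 0 - \<mu>) \<le> M + norm (scW (lam 0 - lam k))" if "\<mu> \<in> \<Lambda>s" for \<mu>
    proof -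
      have "scW (lam 0 - \<mu>) = scW (lam 0 - lam k) + scW (lam k - \<mu>)"
        unfolding sc_def by (simp add: vec_eq_iff algebra_simps)
      then have "norm (scW (lam 0 - \<mu>)) \<le> norm (scW (lam 0 - lam k)) + norm (scW (lam k - \<mu>))"
        by (metis norm_triangle_ineq)
      then show ?thesis using M[OF that] unfolding wn by simp
    qed
    then have "bdd_above ((\<lambda>\<mu>. wnorm Wd (lam 0 - \<mu>)) ` \<Lambda>s)" by (intro bdd_aboveI2) 
    then show False using False by simp
  qed
  then show ?thesis unfolding Tdist_def using Sup_unbdd_eq[OF _ False] by simp
qed

lemma proj_exists: "\<exists>y. y \<in> \<Lambda>s \<and> (\<forall>y'\<in>\<Lambda>s. wnorm Wd (l - y) \<le> wnorm Wd (l - y'))"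
proof -
  have cl: "closed (scW ` \<Lambda>s)"
    by (rule closed_injective_linear_image[OF Lams_closed sc_linear sc_inj]) (rule W_pos)
  have ne: "scW ` \<Lambda>s \<noteq> {}" using Lams_ne by simp
  have "\<exists>x\<in>scW ` \<Lambda>s. \<forall>y\<in>scW ` \<Lambda>s. dist (scW l) x \<le> dist (scW l) y"
    using distance_attains_inf[OF cl ne, of "scW l"] by metis
  then obtain x where x: "x \<in> scW ` \<Lambda>s" "\<And>y. y \<in> scW ` \<Lambda>s \<Longrightarrow> dist (scW l) x \<le> dist (scW l) y"
    by blast
  obtain y where y: "y \<in> \<Lambda>s" "x = scW y" using x(1) by auto
  have "wnorm Wd (l - y) \<le> wnorm Wd (l - y')" if "y' \<in> \<Lambda>s" for y'
    using x(2)[of "scW y'"] that y unfolding wn dist_norm sc_diff by simp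
  then show ?thesis using y by blast
qed

lemma wproj: "wproj Wd \<Lambda>s l \<in> \<Lambda>s" "\<And>y'. y' \<in> \<Lambda>s \<Longrightarrow> wnorm Wd (l - wproj Wd \<Lambda>s l) \<le> wnorm Wd (l - y')"
  using someI_ex[OF proj_exists[of l]] unfolding wproj_def by auto

lemma prox_eq: "prox_res f G g Wd isEq (lam k) = dl k"
  unfolding prox_res_def dual_grad_def zmin_eq dl_def DG_lam ..

definition "ee k = fs - dd (lam k)"

lemma ee_nonneg: "0 \<le> ee k"
  unfolding ee_def using weak[OF lamD] by simp

lemma ee_step: "ee (Suc k) \<le> \<rho> * ee k"
proof -
  define p where "p = wproj Wd \<Lambda>s (lam k)"
  have pL: "p \<in> \<Lambda>s" unfolding p_def by (rule wproj)
  have pD: "p \<in> DD" using pL unfolding Lams_char by auto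
  have eb: "norm (scW (lam k - p)) \<le> \<kappa> * norm (scW (dl k))"
    using error_bound[OF lamD[of k] Tdist_le[of k]] unfolding p_def[symmetric] prox_eq wn .
  have "ee (Suc k) = dd p - dd (lam (Suc k))" unfolding ee_def using Lams_d[OF pL] by simp
  also have "\<dots> \<le> - (scW (lam k - p) \<bullet> scW (dl k)) - 1/2 * (norm (scW (dl k)))\<^sup>2"
    by (rule three_point[OF pD])
  also have "\<dots> \<le> norm (scW (lam k - p)) * norm (scW (dl k))"
    using Cauchy_Schwarz_ineq2[of "scW (lam k - p)" "scW (dl k)"] zero_le_power2[of "norm (scW (dl k))"]
      abs_ge_minus_self[of "scW (lam k - p) \<bullet> scW (dl k)"] by linarith
  also have "\<dots> \<le> \<kappa> * (norm (scW (dl k)))\<^sup>2"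
    using mult_right_mono[OF eb norm_ge_zero[of "scW (dl k)"]] by (simp add: power2_eq_square mult.assoc)
  also have "\<dots> \<le> \<kappa> * (2 * (ee k - ee (Suc k)))"
    using descent[of k] kappa_pos unfolding ee_def by (intro mult_left_mono) auto
  finally have h: "ee (Suc k) * (1 + 2 * \<kappa>) \<le> 2 * \<kappa> * ee k" by (simp add: algebra_simps)
  have r: "2 * \<kappa> / (1 + 2 * \<kappa>) \<le> \<rho>"
    unfolding \<rho>_def using kappa_pos by (simp add: field_simps)
  have "ee (Suc k) \<le> 2 * \<kappa> / (1 + 2 * \<kappa>) * ee k"
    using h kappa_pos by (simp add: field_simps)
  also have "\<dots> \<le> \<rho> * ee k" using r ee_nonneg by (rule mult_right_mono)
  finally show ?thesis .
qed

lemma ee_1: "ee 1 \<le> 1/2 * (Rdist Wd \<Lambda>s (lam 0))\<^sup>2"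
proof -
  define p where "p = wproj Wd \<Lambda>s (lam 0)"
  have pL: "p \<in> \<Lambda>s" unfolding p_def by (rule wproj)
  have pD: "p \<in> DD" using pL unfolding Lams_char by auto
  have sym: "wnorm Wd (x - y) = wnorm Wd (y - x)" for x y
    unfolding wn sc_diff by (simp add: norm_minus_commute)
  have R: "Rdist Wd \<Lambda>s (lam 0) = norm (scW (lam 0 - p))"
    unfolding Rdist_def
  proof (rule cInf_eq_minimum)
    show "norm (scW (lam 0 - p)) \<in> (\<lambda>\<mu>. wnorm Wd (\<mu> - lam 0)) ` \<Lambda>s"
      using pL sym wn by (auto intro!: image_eqI[where x=p])
  next
    fix x assume "x \<in> (\<lambda>\<mu>. wnorm Wd (\<mu> - lam 0)) ` \<Lambda>s"
    then obtain \<mu> where "\<mu> \<in> \<Lambda>s" "x = wnorm Wd (\<mu> - lam 0)" by auto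
    then show "norm (scW (lam 0 - p)) \<le> x" using wproj(2)[of \<mu> "lam 0"] sym wn unfolding p_def by metis
  qed
  have "ee 1 = dd p - dd (lam (Suc 0))" unfolding ee_def using Lams_d[OF pL] by simp
  also have "\<dots> \<le> - (scW (lam 0 - p) \<bullet> scW (dl 0)) - 1/2 * (norm (scW (dl 0)))\<^sup>2"
    by (rule three_point[OF pD])
  also have "\<dots> \<le> 1/2 * (norm (scW (lam 0 - p)))\<^sup>2"
  proof -
    have "0 \<le> (norm (scW (lam 0 - p) + scW (dl 0)))\<^sup>2" by simp
    then show ?thesis
      by (simp add: power2_norm_eq_inner inner_add_left inner_add_right inner_commute)
  qed
  finally show ?thesis unfolding R .
qed

lemma rho_bounds: "0 < \<rho>" "\<rho> < 1"
  unfolding \<rho>_def using kappa_pos by (auto simp: field_simps)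

lemma ee_pow: "ee (Suc k) \<le> \<rho> ^ k * ee 1"
proof (induction k)
  case 0 then show ?case by simp
next
  case (Suc k)
  have "ee (Suc (Suc k)) \<le> \<rho> * ee (Suc k)" by (rule ee_step)
  also have "\<dots> \<le> \<rho> * (\<rho> ^ k * ee 1)" using Suc rho_bounds by (intro mult_left_mono) auto
  finally show ?case by (simp add: mult.assoc)
qed

lemma main: "\<forall>k. primal_opt f isEq G g - dualfun f G g (lam (Suc k))
              \<le> 1/2 * \<rho> powr (real k - 1) * (Rdist Wd \<Lambda>s (lam 0))\<^sup>2"
proof
  fix k
  define R2 where "R2 = 1/2 * (Rdist Wd \<Lambda>s (lam 0))\<^sup>2"
  have R0: "0 \<le> R2" unfolding R2_def by simp
  have "\<rho> ^ k \<le> \<rho> powr (real k - 1)"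
  proof -
    have "\<rho> powr (real k - 1) = \<rho> ^ k / \<rho>"
      using rho_bounds by (simp add: powr_diff powr_realpow)
    also have "\<rho> ^ k \<le> \<rho> ^ k / \<rho>"
      using rho_bounds by (simp add: field_simps)
    finally show ?thesis by simp
  qed
  then have "\<rho> ^ k * R2 \<le> \<rho> powr (real k - 1) * R2" using R0 by (rule mult_right_mono)
  moreover have "ee (Suc k) \<le> \<rho> ^ k * R2"
  proof -
    have "ee (Suc k) \<le> \<rho> ^ k * ee 1" by (rule ee_pow)
    also have "\<dots> \<le> \<rho> ^ k * R2"
      unfolding R2_def using ee_1 rho_bounds by (intro mult_left_mono) auto
    finally show ?thesis .
  qed
  ultimately have "ee (Suc k) \<le> \<rho> powr (real k - 1) * R2" by (rule order_trans[rotated])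
  moreover have "\<rho> powr (real k - 1) * R2 = 1/2 * \<rho> powr (real k - 1) * (Rdist Wd \<Lambda>s (lam 0))\<^sup>2"
    unfolding R2_def by simp
  ultimately show "primal_opt f isEq G g - dualfun f G g (lam (Suc k))
              \<le> 1/2 * \<rho> powr (real k - 1) * (Rdist Wd \<Lambda>s (lam 0))\<^sup>2"
    unfolding ee_def by simp
qed

end

theorem theorem2:
  fixes fi :: "'m::finite \<Rightarrow> real^'n \<Rightarrow> real"
    and \<sigma> L :: "'m \<Rightarrow> real"
    and blk :: "'n \<Rightarrow> 'm"
    and rblk :: "'r::finite \<Rightarrow> 'mb::finite"
    and E :: "'mb \<Rightarrow> 'm \<Rightarrow> bool"
    and isEq :: "'r \<Rightarrow> bool"
    and G :: "real^'n^'r"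
    and g :: "real^'r"
    and zs :: "nat \<Rightarrow> real^'n"
    and lam :: "nat \<Rightarrow> real^'r"
    and \<kappa> \<rho> :: real
    and f :: "real^'n \<Rightarrow> real"
    and Wd :: "'r \<Rightarrow> real"
    and \<Lambda>s :: "(real^'r) set"
  assumes f_def: "f = (\<lambda>z. \<Sum>i\<in>UNIV. fi i z)"
    and Wd_def: "Wd = Wdiag G blk rblk E \<sigma>"
    and \<Lambda>s_def: "\<Lambda>s = dual_opt_set f G g isEq"
    and \<rho>_def: "\<rho> = 4 * (1 + \<kappa>) / (1 + 4 * (1 + \<kappa>))"
    and E_sparsity: "\<And>j i r c. \<not> E j i \<Longrightarrow> rblk r = j \<Longrightarrow> blk c = i \<Longrightarrow> G$r$c = 0"
    and separable: "\<And>i. depends_only_on_blk blk i (fi i)"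
    and convex: "\<And>i. convex_on UNIV (fi i)"
    and sigma_pos: "\<And>i. \<sigma> i > 0"
    and strongly_convex: "\<And>i. strongly_convex_blk blk i (\<sigma> i) (fi i)"
    and lipschitz_grad: "\<And>i. lipschitz_grad_blk blk i (L i) (fi i)"
    and full_rank: "full_row_rank_eq isEq G"
    and slater: "slater isEq G g"
    and W_pos: "\<And>r. Wd r > 0"
    and lam0: "lam 0 \<in> dual_dom isEq"
    and DG_z: "\<And>k z. Lag f G g (zs k) (lam k) \<le> Lag f G g z (lam k)"
    and DG_lam: "\<And>k. lam (Suc k) =
                   proj_D isEq (lam k + (\<chi> r. (G *v zs k - g)$r / Wd r))"
    and kappa_pos: "\<kappa> > 0"
    and error_bound: "\<And>l. l \<in> dual_dom isEq \<Longrightarrow> Tdist Wd \<Lambda>s l \<le> Tdist Wd \<Lambda>s (lam 0) \<Longrightarrow>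
                wnorm Wd (l - wproj Wd \<Lambda>s l) \<le> \<kappa> * wnorm Wd (prox_res f G g Wd isEq l)"
  shows "\<forall>k. primal_opt f isEq G g - dualfun f G g (lam (Suc k))
              \<le> 1/2 * \<rho> powr (real k - 1) * (Rdist Wd \<Lambda>s (lam 0))\<^sup>2"
proof -
  interpret dg fi \<sigma> blk rblk E isEq G g zs lam \<kappa> \<rho> f Wd \<Lambda>s
    by (unfold_locales; fact)
  show ?thesis by (rule main)
qed

end
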